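(* Let $q=p^a$ with $p$ prime, let $G\le GL(V)=GL_d(q)$ be $p$-exceptional with $C_V(O^{p'}(G))=0$, let $t\in G$ have order $p$, and let $P$ be a Sylow $p$-subgroup of $G$. Then: (i) $d\le r_p\log_q|G:N_G(P)|$, where $r_p$ is the minimal number of $G$-conjugates of $P$ that generate $O^{p'}(G)$; (ii) $|V|\le |C_V(t)|\cdot|t^G|$; (iii) if $O^{p'}(G)$ is generated by $\alpha$ conjugates of $t$, then $q^{d/\alpha}\le|t^G|$.
   Context: $G\le GL_d(q)$ is $p$-exceptional if $p$ divides $|G|$ and every orbit of $G$ on $V=\mathbb{F}_q^d$ has size coprime to $p$. $O^{p'}(G)$ is the subgroup generated by all $p$-elements of $G$. $C_V(X)$ is the subspace of vectors fixed by all elements of $X$; $t^G$ is the conjugacy class of $t$ in $G$. *)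

theory Defs
  imports "HOL-Analysis.Analysis" "HOL-Algebra.Algebra"
begin

definition GL :: "('k::field ^'n::finite ^'n) monoid" where
  "GL = \<lparr>carrier = {A. invertible A}, mult = (**), one = mat 1\<rparr>"

definition mat_act :: "'k::field ^'n::finite ^'n \<Rightarrow> 'k ^'n \<Rightarrow> 'k ^'n" where
  "mat_act g v = g *v v"

definition p_exceptional :: "nat \<Rightarrow> ('k::field ^'n::finite ^'n) set \<Rightarrow> bool" where
  "p_exceptional p G \<longleftrightarrow> p dvd card G \<and>
     (\<forall>v::'k^'n. coprime (card (orbit (GL\<lparr>carrier := G\<rparr>) mat_act v)) p)"

definition p_elements :: "nat \<Rightarrow> ('k::field ^'n::finite ^'n) set \<Rightarrow> ('k ^'n ^'n) set" where
  "p_elements p G = {g \<in> G. \<exists>k::nat. group.ord GL g = p ^ k}"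

definition Opp :: "nat \<Rightarrow> ('k::field ^'n::finite ^'n) set \<Rightarrow> ('k ^'n ^'n) set" where
  "Opp p G = generate GL (p_elements p G)"

definition fixed_space :: "('k::field ^'n::finite ^'n) set \<Rightarrow> ('k ^'n) set" where
  "fixed_space S = {x. \<forall>g. g \<in> S \<longrightarrow> mat_act g x = x}"

definition conj_elem :: "('k::field ^'n::finite ^'n) \<Rightarrow> ('k ^'n ^'n) \<Rightarrow> ('k ^'n ^'n)" where
  "conj_elem g x = g ** x ** matrix_inv g"

definition conj_class :: "('k::field ^'n::finite ^'n) set \<Rightarrow> ('k ^'n ^'n) \<Rightarrow> ('k ^'n ^'n) set" where
  "conj_class G t = {conj_elem g t | g. g \<in> G}"

definition sylow_sub :: "nat \<Rightarrow> ('k::field ^'n::finite ^'n) set \<Rightarrow> ('k ^'n ^'n) set \<Rightarrow> bool" where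
  "sylow_sub p G P \<longleftrightarrow> subgroup P GL \<and> P \<subseteq> G \<and> card P = p ^ multiplicity p (card G)"

definition r_p :: "nat \<Rightarrow> ('k::field ^'n::finite ^'n) set \<Rightarrow> ('k ^'n ^'n) set \<Rightarrow> nat" where
  "r_p p G P = (LEAST r. \<exists>gs. length gs = r \<and> set gs \<subseteq> G \<and>
       generate GL (\<Union>g\<in>set gs. conj_elem g ` P) = Opp p G)"

end

theory Submission
  imports Defs
begin


lemma inv_mat:
  fixes A :: "'k::field^'n::finite^'n"
  assumes "invertible A"
  shows "A ** matrix_inv A = mat 1" "matrix_inv A ** A = mat 1"
proof -
  have "\<exists>A'. A ** A' = mat 1 \<and> A' ** A = mat 1" using assms unfolding invertible_def by blast
  then have "A ** matrix_inv A = mat 1 \<and> matrix_inv A ** A = mat 1"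
    unfolding matrix_inv_def by (rule someI_ex)
  then show "A ** matrix_inv A = mat 1" "matrix_inv A ** A = mat 1" by auto
qed

lemma invertible_matrix_inv:
  fixes A :: "'k::field^'n::finite^'n"
  assumes "invertible A" shows "invertible (matrix_inv A)"
  using inv_mat[OF assms] unfolding invertible_def by blast

lemma inv_mat1: "invertible (mat 1 :: 'k::field^'n::finite^'n)"
  unfolding invertible_def by (rule exI[of _ "mat 1"]) simp

lemma group_GL: "group (GL :: ('k::field^'n::finite^'n) monoid)"
proof (rule groupI)
  show "\<exists>y\<in>carrier GL. y \<otimes>\<^bsub>GL\<^esub> x = \<one>\<^bsub>GL\<^esub>" if "x \<in> carrier GL" for x :: "'k^'n^'n"
    using that inv_mat invertible_matrix_inv by (auto simp: GL_def) 
qed (auto simp: GL_def invertible_mult matrix_mul_assoc inv_mat1)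

lemma GL_simps [simp]:
  "carrier GL = {A. invertible A}" "mult GL = (**)" "one GL = mat 1"
  by (auto simp: GL_def)

lemma GL_inv:
  fixes A :: "'k::field^'n::finite^'n"
  assumes "invertible A" shows "inv\<^bsub>GL\<^esub> A = matrix_inv A"
proof -
  interpret group "GL :: ('k^'n^'n) monoid" by (rule group_GL)
  show ?thesis using assms inv_mat[OF assms] invertible_matrix_inv[OF assms]
    by (intro inv_equality) auto
qed

lemma mk_action:
  fixes K (structure)
  assumes "group K"
    and cl: "\<And>g x. g \<in> carrier K \<Longrightarrow> x \<in> E \<Longrightarrow> f g x \<in> E"
    and one: "\<And>x. x \<in> E \<Longrightarrow> f \<one> x = x"
    and mul: "\<And>g h x. g \<in> carrier K \<Longrightarrow> h \<in> carrier K \<Longrightarrow> x \<in> E \<Longrightarrow> f (g \<otimes> h) x = f g (f h x)"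
  shows "group_action K E (\<lambda>g. restrict (f g) E)"
proof -
  interpret group K by fact
  have bij: "restrict (f g) E \<in> Bij E" if g: "g \<in> carrier K" for g
  proof -
    have "bij_betw (f g) E E"
    proof (rule bij_betwI[where g = "f (inv g)"])
      show "f g \<in> E \<rightarrow> E" using cl g by auto
      show "f (inv g) \<in> E \<rightarrow> E" using cl g by auto
      show "f (inv g) (f g x) = x" if "x \<in> E" for x
        using mul[of "inv g" g x] one[of x] that g by auto
      show "f g (f (inv g) y) = y" if "y \<in> E" for y
        using mul[of g "inv g" y] one[of y] that g by auto
    qed
    then show ?thesis unfolding Bij_def by (auto simp: bij_betw_def inj_on_def)
  qed
  show ?thesis
    unfolding group_action_def group_hom_def group_hom_axioms_def
  proof (intro conjI)
    show "group K" by fact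
    show "group (BijGroup E)" by (rule group_BijGroup)
    show "(\<lambda>g. restrict (f g) E) \<in> hom K (BijGroup E)"
      unfolding hom_def
    proof (intro CollectI conjI ballI)
      show "(\<lambda>g. restrict (f g) E) \<in> carrier K \<rightarrow> carrier (BijGroup E)"
        using bij by (auto simp: BijGroup_def)
      fix x y assume x: "x \<in> carrier K" and y: "y \<in> carrier K"
      show "restrict (f (x \<otimes> y)) E = restrict (f x) E \<otimes>\<^bsub>BijGroup E\<^esub> restrict (f y) E"
        using bij[OF x] bij[OF y] x y mul cl
        by (auto simp: BijGroup_def compose_def restrict_def fun_eq_iff)
    qed
  qed
qed

lemma fixed_point:
  fixes K (structure)
  assumes "group K" "card (carrier K) = p ^ m" "Factorial_Ring.prime p" "finite E" "\<not> p dvd card E"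
    and cl: "\<And>g x. g \<in> carrier K \<Longrightarrow> x \<in> E \<Longrightarrow> f g x \<in> E"
    and one: "\<And>x. x \<in> E \<Longrightarrow> f \<one> x = x"
    and mul: "\<And>g h x. g \<in> carrier K \<Longrightarrow> h \<in> carrier K \<Longrightarrow> x \<in> E \<Longrightarrow> f (g \<otimes> h) x = f g (f h x)"
  shows "\<exists>x\<in>E. \<forall>g\<in>carrier K. f g x = x"
proof (rule ccontr)
  assume nf: "\<not> ?thesis"
  interpret group K by fact
  let ?\<phi> = "\<lambda>g. restrict (f g) E"
  interpret A: group_action K E ?\<phi> using mk_action[OF assms(1) cl one mul] by blast
  have "p dvd card Orb" if Orb: "Orb \<in> orbits K E ?\<phi>" for Orb
  proof -
    obtain x where x: "x \<in> E" and Ox: "Orb = orbit K ?\<phi> x" using Orb unfolding orbits_def by blast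
    have "card Orb * card (stabilizer K ?\<phi> x) = p ^ m"
      using A.orbit_stabilizer_theorem[OF x] Ox assms(2) unfolding order_def by simp
    then have "card Orb dvd p ^ m" by (metis dvd_triv_left)
    then obtain i where i: "card Orb = p ^ i" using divides_primepow_nat[OF assms(3)] by blast
    obtain g where g: "g \<in> carrier K" "f g x \<noteq> x" using nf x by blast
    have xO: "x \<in> Orb" using A.orbit_refl[OF x] Ox by simp
    have "?\<phi> g x \<in> orbit K ?\<phi> x" unfolding orbit_def using g(1) by blast
    then have gO: "f g x \<in> Orb" using x Ox by simp
    have OE: "Orb \<subseteq> E" using Ox x A.element_image unfolding orbit_def by blast
    have "card Orb \<noteq> 1"
    proof
      assume "card Orb = 1"
      then obtain a where "Orb = {a}" by (rule card_1_singletonE)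
      then show False using xO gO g(2) by simp
    qed
    then have "i \<noteq> 0" using i by (cases i) auto
    then show ?thesis using i by (simp add: dvd_power)
  qed
  then have "p dvd (\<Sum>Orb\<in>orbits K E ?\<phi>. card Orb)" by (rule dvd_sum)
  moreover have "(\<Sum>Orb\<in>orbits K E ?\<phi>. card Orb) = card E"
  proof -
    have e: "sum (\<lambda>x. 1::nat) = card" by (rule ext, rule card_eq_sum[symmetric])
    show ?thesis using A.disjoint_sum[OF assms(4), of "\<lambda>_. 1::nat"] unfolding e .
  qed
  ultimately show False using assms(5) by simp
qed

lemma matrix_inv_inv:
  fixes A :: "'k::field^'n::finite^'n"
  assumes "invertible A" shows "matrix_inv (matrix_inv A) = A"
proof -
  interpret group "GL :: ('k^'n^'n) monoid" by (rule group_GL)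
  have "inv\<^bsub>GL\<^esub> (inv\<^bsub>GL\<^esub> A) = A" using assms by simp
  moreover have "inv\<^bsub>GL\<^esub> A = matrix_inv A" using GL_inv[OF assms] .
  moreover have "inv\<^bsub>GL\<^esub> (matrix_inv A) = matrix_inv (matrix_inv A)"
    using GL_inv[OF invertible_matrix_inv[OF assms]] .
  ultimately show ?thesis by simp
qed

lemma fixed_generate:
  fixes S :: "('k::field^'n::finite^'n) set"
  assumes "S \<subseteq> {A. invertible A}"
  shows "fixed_space (generate GL S) = fixed_space S"
proof
  show "fixed_space (generate GL S) \<subseteq> fixed_space S"
  proof
    fix x assume x: "x \<in> fixed_space (generate GL S)"
    have "mat_act g x = x" if "g \<in> S" for g
      using x generate.incl[OF that, of GL] unfolding fixed_space_def by blast
    then show "x \<in> fixed_space S" unfolding fixed_space_def by blast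
  qed
  show "fixed_space S \<subseteq> fixed_space (generate GL S)"
  proof
    fix x assume x: "x \<in> fixed_space S"
    have "mat_act g x = x" if "g \<in> generate GL S" for g
      using that
    proof induction
      case one then show ?case unfolding mat_act_def GL_simps by (rule matrix_vector_mul_lid)
    next
      case (incl h) then show ?case using x unfolding fixed_space_def by blast
    next
      case (inv h)
      then have hi: "invertible h" "h *v x = x" using assms x unfolding fixed_space_def mat_act_def by auto
      have "matrix_inv h *v x = matrix_inv h *v (h *v x)" using hi by simp
      also have "\<dots> = x" using inv_mat[OF hi(1)] by (simp add: matrix_vector_mul_assoc)
      finally show ?case using GL_inv[OF hi(1)] by (simp add: mat_act_def)
    next
      case (eng h1 h2) then show ?case unfolding mat_act_def GL_simps by (simp flip: matrix_vector_mul_assoc)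
    qed
    then show "x \<in> fixed_space (generate GL S)" by (auto simp: fixed_space_def)
  qed
qed

lemma conj_fix:
  fixes g :: "'k::field^'n::finite^'n"
  assumes "invertible g"
  shows "(conj_elem g y *v v = v) \<longleftrightarrow> (y *v (matrix_inv g *v v) = matrix_inv g *v v)"
proof -
  note I = inv_mat[OF assms]
  have I2a: "matrix_inv g ** (g ** Z) = Z" for Z
    by (metis I(2) matrix_mul_assoc matrix_mul_lid)
  have I2b: "g ** (matrix_inv g ** Z) = Z" for Z
    by (metis I(1) matrix_mul_assoc matrix_mul_lid)
  note I2 = I2a I2b
  have e: "conj_elem g y *v v = g *v (y *v (matrix_inv g *v v))"
    by (simp add: conj_elem_def matrix_vector_mul_assoc matrix_mul_assoc)
  show ?thesis
  proof
    assume "conj_elem g y *v v = v"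
    then have "matrix_inv g *v (g *v (y *v (matrix_inv g *v v))) = matrix_inv g *v v" using e by simp
    then show "y *v (matrix_inv g *v v) = matrix_inv g *v v"
      by (simp add: matrix_vector_mul_assoc I I2)
  next
    assume "y *v (matrix_inv g *v v) = matrix_inv g *v v"
    then show "conj_elem g y *v v = v" using e by (simp add: matrix_vector_mul_assoc I I2)
  qed
qed

lemma card_fixed_conj:
  fixes g :: "'k::field^'n::finite^'n"
  assumes "invertible g"
  shows "card (fixed_space (conj_elem g ` Q)) = card (fixed_space Q)"
proof -
  note I = inv_mat[OF assms]
  have "fixed_space (conj_elem g ` Q) = (\<lambda>v. g *v v) ` fixed_space Q"
  proof (intro equalityI subsetI)
    fix w assume "w \<in> fixed_space (conj_elem g ` Q)"
    then have "matrix_inv g *v w \<in> fixed_space Q"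
      using conj_fix[OF assms] by (auto simp: fixed_space_def mat_act_def)
    moreover have "w = g *v (matrix_inv g *v w)" by (simp add: matrix_vector_mul_assoc I)
    ultimately show "w \<in> (\<lambda>v. g *v v) ` fixed_space Q" by blast
  next
    fix w assume "w \<in> (\<lambda>v. g *v v) ` fixed_space Q"
    then obtain v where v: "v \<in> fixed_space Q" "w = g *v v" by blast
    have "matrix_inv g *v w = v" using v by (simp add: matrix_vector_mul_assoc I)
    then show "w \<in> fixed_space (conj_elem g ` Q)"
      using v conj_fix[OF assms] by (auto simp: fixed_space_def mat_act_def)
  qed
  moreover have "inj ((*v) g)" using inj_matrix_vector_mult[OF assms] .
  ultimately show ?thesis by (simp add: card_image inj_on_subset)
qed

lemma covering:
  fixes G K :: "('k::{field,finite}^'n::finite^'n) set"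
  assumes G: "subgroup G GL" and ex: "p_exceptional p G" and p: "Factorial_Ring.prime p"
    and K: "subgroup K GL" "K \<subseteq> G" "card K = p ^ m"
  shows "\<exists>g\<in>G. \<forall>k\<in>K. conj_elem g k *v v = v"
proof -
  interpret GLg: group "GL :: ('k^'n^'n) monoid" by (rule group_GL)
  let ?E = "orbit (GL\<lparr>carrier := G\<rparr>) mat_act v"
  have E: "?E = {g *v v | g. g \<in> G}" by (simp add: orbit_def mat_act_def)
  have cop: "coprime (card ?E) p" using ex unfolding p_exceptional_def by blast
  have ndvd: "\<not> p dvd card ?E"
  proof
    assume "p dvd card ?E"
    then have "p dvd gcd (card ?E) p" by simp
    then show False using cop p by (simp add: coprime_iff_gcd_eq_1)
  qed
  have grK: "group (GL\<lparr>carrier := K\<rparr>)" using K(1) GLg.is_group by (rule subgroup.subgroup_is_group)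
  have KG: "k \<in> G" if "k \<in> K" for k using that K(2) by blast
  have finE: "finite ?E" by simp
  have cl: "k *v x \<in> ?E" if kK: "k \<in> carrier (GL\<lparr>carrier := K\<rparr>)" and xE: "x \<in> ?E" for k x
  proof -
    obtain g where g: "g \<in> G" "x = g *v v" using xE E by blast
    have "k ** g \<in> G" using subgroup.m_closed[OF G, of k g] kK g KG by simp
    moreover have "k *v x = (k ** g) *v v" using g by (simp add: matrix_vector_mul_assoc)
    ultimately show ?thesis using E by blast
  qed
  have one: "\<one>\<^bsub>GL\<lparr>carrier := K\<rparr>\<^esub> *v x = x" for x by simp
  have mul: "(g \<otimes>\<^bsub>GL\<lparr>carrier := K\<rparr>\<^esub> h) *v x = g *v (h *v x)" for g h x
    by (simp add: matrix_vector_mul_assoc)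
  obtain w where w: "w \<in> ?E" and fx: "\<forall>k\<in>K. k *v w = w"
    using fixed_point[OF grK _ p finE ndvd, of m "\<lambda>k x. k *v x", OF _ cl one mul] K(3) by auto
  obtain g0 where g0: "g0 \<in> G" "w = g0 *v v" using w E by auto
  have ig0: "invertible g0" using g0 subgroup.subset[OF G] by auto
  have "inv\<^bsub>GL\<^esub> g0 \<in> G" using subgroup.m_inv_closed[OF G g0(1)] .
  then have ming: "matrix_inv g0 \<in> G" using GL_inv[OF ig0] by simp
  show ?thesis
  proof (intro bexI[OF _ ming] ballI)
    fix k assume "k \<in> K"
    then show "conj_elem (matrix_inv g0) k *v v = v"
      using conj_fix[OF invertible_matrix_inv[OF ig0]] fx g0
      by (simp add: matrix_inv_inv[OF ig0])
  qed
qed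


lemma card_fibers:
  fixes f :: "'a::{ab_group_add,finite} \<Rightarrow> 'b"
  assumes eq: "\<And>v w. f v = f w \<longleftrightarrow> v - w \<in> Kr"
  shows "CARD('a) = card (range f) * card Kr"
proof -
  have fib: "f -` {f v} = (\<lambda>k. k + v) ` Kr" for v
  proof (intro equalityI subsetI)
    fix x assume "x \<in> f -` {f v}"
    then have "x - v \<in> Kr" using eq by simp
    moreover have "x = (x - v) + v" by simp
    ultimately show "x \<in> (\<lambda>k. k + v) ` Kr" by blast
  next
    fix x assume "x \<in> (\<lambda>k. k + v) ` Kr"
    then obtain k where "k \<in> Kr" "x = k + v" by blast
    then show "x \<in> f -` {f v}" using eq[of x v] by simp
  qed
  have cfib: "card (f -` {y}) = card Kr" if yr: "y \<in> range f" for y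
  proof -
    obtain v where "y = f v" using yr by blast
    moreover have "card ((\<lambda>k. k + v) ` Kr) = card Kr" by (rule card_image) (simp add: inj_on_def)
    ultimately show ?thesis using fib by simp
  qed
  have U: "(UNIV::'a set) = (\<Union>y\<in>range f. f -` {y})" by blast
  have "card (UNIV::'a set) = (\<Sum>y\<in>range f. card (f -` {y}))"
    by (subst U, rule card_UN_disjoint) auto
  also have "\<dots> = (\<Sum>y\<in>range f. card Kr)" using cfib by (rule sum.cong[OF refl])
  also have "\<dots> = card (range f) * card Kr" by simp
  finally show ?thesis .
qed

definition psi :: "('k::field^'n::finite^'n) set \<Rightarrow> 'k^'n \<Rightarrow> ('k^'n^'n \<Rightarrow> 'k^'n)" where
  "psi Q v = (\<lambda>y. if y \<in> Q then (y - mat 1) *v v else 0)"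

lemma psi_eq:
  fixes Q :: "('k::field^'n::finite^'n) set"
  shows "psi Q v = psi Q w \<longleftrightarrow> v - w \<in> fixed_space Q"
proof -
  have "psi Q v = psi Q w \<longleftrightarrow> (\<forall>y\<in>Q. (y - mat 1) *v v = (y - mat 1) *v w)"
  proof
    assume h: "psi Q v = psi Q w"
    show "\<forall>y\<in>Q. (y - mat 1) *v v = (y - mat 1) *v w"
    proof
      fix y assume y: "y \<in> Q"
      have "psi Q v y = psi Q w y" using h by simp
      then show "(y - mat 1) *v v = (y - mat 1) *v w" using y unfolding psi_def by simp
    qed
  next
    assume h: "\<forall>y\<in>Q. (y - mat 1) *v v = (y - mat 1) *v w"
    show "psi Q v = psi Q w"
    proof
      fix y show "psi Q v y = psi Q w y" using h unfolding psi_def by simp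
    qed
  qed
  also have "\<dots> \<longleftrightarrow> (\<forall>y\<in>Q. y *v (v - w) = v - w)"
  proof -
    have "(y - mat 1) *v v = (y - mat 1) *v w \<longleftrightarrow> y *v (v - w) = v - w" for y
    proof -
      have a: "(y - mat 1) *v v = y *v v - v" "(y - mat 1) *v w = y *v w - w"
        by (simp_all add: matrix_vector_mult_diff_rdistrib)
      have b: "y *v (v - w) = y *v v - y *v w" by (rule matrix_vector_mult_diff_distrib)
      have c: "(a - b = c - d) \<longleftrightarrow> (a - c = b - d)" for a b c d :: "'k^'n"
        by (simp add: algebra_simps)
      show ?thesis unfolding a b by (rule c)
    qed
    then show ?thesis by blast
  qed
  also have "\<dots> \<longleftrightarrow> v - w \<in> fixed_space Q" unfolding fixed_space_def mat_act_def by blast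
  finally show ?thesis .
qed

lemma card_psi:
  fixes Q :: "('k::{field,finite}^'n::finite^'n) set"
  shows "CARD('k^'n) = card (range (psi Q)) * card (fixed_space Q)"
  using card_fibers[of "psi Q" "fixed_space Q"] psi_eq by blast

lemma card_le_prod:
  fixes Qs :: "('k::{field,finite}^'n::finite^'n) set list"
  assumes "fixed_space (\<Union>(set Qs)) = {0}"
  shows "CARD('k^'n) \<le> (\<Prod>i<length Qs. card (range (psi (Qs!i))))"
proof -
  let ?F = "\<lambda>v. \<lambda>i\<in>{..<length Qs}. psi (Qs!i) v"
  have inj: "inj ?F"
  proof (rule injI)
    fix v w assume h: "?F v = ?F w"
    have "v - w \<in> fixed_space (Qs!i)" if "i < length Qs" for i
    proof -
      have "?F v i = ?F w i" using h by simp
      then have "psi (Qs!i) v = psi (Qs!i) w" using that by simp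
      then show ?thesis using psi_eq by blast
    qed
    have "mat_act g (v - w) = v - w" if g: "g \<in> \<Union>(set Qs)" for g
    proof -
      obtain Q where Q: "Q \<in> set Qs" "g \<in> Q" using g by blast
      obtain i where i: "i < length Qs" "Qs ! i = Q" using Q(1) by (auto simp: in_set_conv_nth)
      have "v - w \<in> fixed_space Q" using i \<open>\<And>i. i < length Qs \<Longrightarrow> v - w \<in> fixed_space (Qs ! i)\<close> by blast
      then show ?thesis using Q(2) unfolding fixed_space_def by blast
    qed
    then have "v - w \<in> fixed_space (\<Union>(set Qs))" unfolding fixed_space_def by blast
    then show "v = w" using assms by simp
  qed
  have sub: "range ?F \<subseteq> PiE {..<length Qs} (\<lambda>i. range (psi (Qs!i)))" by auto
  have "card (UNIV :: ('k^'n) set) \<le> card (PiE {..<length Qs} (\<lambda>i. range (psi (Qs!i))))"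
    by (rule card_inj_on_le[OF inj sub]) (simp add: finite_PiE)
  also have "\<dots> = (\<Prod>i<length Qs. card (range (psi (Qs!i))))" by (simp add: card_PiE)
  finally show ?thesis .
qed

lemma card_conjugates:
  fixes G P :: "('k::{field,finite}^'n::finite^'n) set"
  assumes G: "subgroup G GL" and PG: "P \<subseteq> G"
  shows "card ((\<lambda>g. conj_elem g ` P) ` G) * card (normalizer (GL\<lparr>carrier := G\<rparr>) P) = card G"
proof -
  interpret GLg: group "GL :: ('k^'n^'n) monoid" by (rule group_GL)
  let ?H = "GL\<lparr>carrier := G\<rparr>"
  have grH: "group ?H" using G GLg.is_group by (rule subgroup.subgroup_is_group)
  let ?\<phi> = "\<lambda>g. \<lambda>S\<in>{S. S \<subseteq> carrier ?H}. g <#\<^bsub>?H\<^esub> S #>\<^bsub>?H\<^esub> (inv\<^bsub>?H\<^esub> g)"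
  interpret A: group_action ?H "{S. S \<subseteq> carrier ?H}" ?\<phi>
    by (rule group.action_by_conjugation_on_power_set[OF grH])
  have PH: "P \<in> {S. S \<subseteq> carrier ?H}" using PG by simp
  have os: "card (orbit ?H ?\<phi> P) * card (stabilizer ?H ?\<phi> P) = order ?H"
    by (rule A.orbit_stabilizer_theorem[OF PH])
  have phiP: "?\<phi> g P = conj_elem g ` P" if g: "g \<in> G" for g
  proof -
    have ig: "invertible g" using g subgroup.subset[OF G] by auto
    have "inv\<^bsub>?H\<^esub> g = inv\<^bsub>GL\<^esub> g" using GLg.m_inv_consistent[OF G g] .
    also have "\<dots> = matrix_inv g" by (rule GL_inv[OF ig])
    finally have i: "inv\<^bsub>?H\<^esub> g = matrix_inv g" .
    show ?thesis using PG unfolding i l_coset_def r_coset_def conj_elem_def by auto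
  qed
  have cH: "carrier ?H = G" by simp
  have "orbit ?H ?\<phi> P = (\<lambda>g. ?\<phi> g P) ` G"
    unfolding orbit_def cH by (rule Setcompr_eq_image)
  also have "\<dots> = (\<lambda>g. conj_elem g ` P) ` G" using phiP by (rule image_cong[OF refl])
  finally have "orbit ?H ?\<phi> P = (\<lambda>g. conj_elem g ` P) ` G" .
  then show ?thesis using os unfolding normalizer_def order_def by simp
qed


lemma conj_mult:
  fixes g :: "'k::field^'n::finite^'n"
  assumes "invertible g"
  shows "conj_elem g a ** conj_elem g b = conj_elem g (a ** b)"
proof -
  note I = inv_mat[OF assms]
  have "conj_elem g a ** conj_elem g b = g ** a ** (matrix_inv g ** g) ** b ** matrix_inv g"
    unfolding conj_elem_def by (simp add: matrix_mul_assoc)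
  also have "\<dots> = conj_elem g (a ** b)" unfolding I conj_elem_def by (simp add: matrix_mul_assoc)
  finally show ?thesis .
qed

lemma conj_pow:
  fixes g :: "'k::field^'n::finite^'n"
  assumes "invertible g"
  shows "conj_elem g a [^]\<^bsub>GL\<^esub> (n::nat) = conj_elem g (a [^]\<^bsub>GL\<^esub> n)"
proof (induction n)
  case 0
  then show ?case using inv_mat[OF assms] by (simp add: conj_elem_def)
next
  case (Suc n)
  then show ?case using conj_mult[OF assms] by simp
qed

lemma conj_one_iff:
  fixes g :: "'k::field^'n::finite^'n"
  assumes "invertible g"
  shows "conj_elem g a = mat 1 \<longleftrightarrow> a = mat 1"
proof
  assume h: "conj_elem g a = mat 1"
  have "a = (matrix_inv g ** g) ** a ** (matrix_inv g ** g)"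
    using inv_mat[OF assms] by simp
  also have "\<dots> = matrix_inv g ** (g ** a ** matrix_inv g) ** g"
    by (simp add: matrix_mul_assoc)
  also have "\<dots> = mat 1" using h inv_mat[OF assms] unfolding conj_elem_def by simp
  finally show "a = mat 1" .
next
  assume "a = mat 1" then show "conj_elem g a = mat 1"
    using inv_mat[OF assms] by (simp add: conj_elem_def)
qed

lemma ord_conj:
  fixes g :: "'k::field^'n::finite^'n"
  assumes g: "invertible g" and y: "invertible y"
  shows "group.ord GL (conj_elem g y) = group.ord GL y"
proof -
  interpret GLg: group "GL :: ('k^'n^'n) monoid" by (rule group_GL)
  have cy: "conj_elem g y \<in> carrier GL"
    by (simp add: conj_elem_def) (intro invertible_mult invertible_matrix_inv g y)
  have "(conj_elem g y [^]\<^bsub>GL\<^esub> n = \<one>\<^bsub>GL\<^esub>) \<longleftrightarrow> GLg.ord y dvd n" for n :: nat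
  proof -
    have "(conj_elem g y [^]\<^bsub>GL\<^esub> n = \<one>\<^bsub>GL\<^esub>) \<longleftrightarrow> (y [^]\<^bsub>GL\<^esub> n = \<one>\<^bsub>GL\<^esub>)"
      using conj_pow[OF g] conj_one_iff[OF g] by simp
    also have "\<dots> \<longleftrightarrow> GLg.ord y dvd n" using y GLg.pow_eq_id[of y n] by simp
    finally show ?thesis .
  qed
  then show ?thesis using GLg.ord_unique[OF cy] by blast
qed

lemma ord_sub:
  fixes P :: "('k::field^'n::finite^'n) set"
  assumes "subgroup P GL" "y \<in> P"
  shows "group.ord GL y = group.ord (GL\<lparr>carrier := P\<rparr>) y"
proof -
  interpret GLg: group "GL :: ('k^'n^'n) monoid" by (rule group_GL)
  have grP: "group (GL\<lparr>carrier := P\<rparr>)" using assms(1) GLg.is_group by (rule subgroup.subgroup_is_group)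
  have "y [^]\<^bsub>GL\<lparr>carrier := P\<rparr>\<^esub> (n::nat) = y [^]\<^bsub>GL\<^esub> n" for n
    by (simp add: nat_pow_def)
  then show ?thesis unfolding group.ord_def[OF group_GL] group.ord_def[OF grP] by simp
qed


lemma pel_eq:
  fixes G P :: "('k::{field,finite}^'n::finite^'n) set"
  assumes G: "subgroup G GL" and p: "Factorial_Ring.prime p" and syl: "sylow_sub p G P"
  shows "p_elements p G = (\<Union>g\<in>G. conj_elem g ` P)"
proof -
  interpret GLg: group "GL :: ('k^'n^'n) monoid" by (rule group_GL)
  let ?H = "GL\<lparr>carrier := G\<rparr>"
  have grH: "group ?H" using G GLg.is_group by (rule subgroup.subgroup_is_group)
  interpret Hg: group ?H by (rule grH)
  have P: "subgroup P GL" "P \<subseteq> G" "card P = p ^ multiplicity p (card G)"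
    using syl unfolding sylow_sub_def by auto
  have PH: "subgroup P ?H" using GLg.subgroup_incl[OF P(1) G P(2)] .
  have Ginv: "invertible g" if "g \<in> G" for g using that subgroup.subset[OF G] by auto
  have invG: "inv\<^bsub>?H\<^esub> g = matrix_inv g" if g: "g \<in> G" for g
    using GLg.m_inv_consistent[OF G g] GL_inv[OF Ginv[OF g]] by simp
  have conjH: "conj_elem g y = g \<otimes>\<^bsub>?H\<^esub> y \<otimes>\<^bsub>?H\<^esub> inv\<^bsub>?H\<^esub> g" if "g \<in> G" for g y
    using invG[OF that] by (simp add: conj_elem_def)
  show ?thesis
  proof (intro equalityI subsetI)
    fix x assume "x \<in> (\<Union>g\<in>G. conj_elem g ` P)"
    then obtain g y where g: "g \<in> G" and y: "y \<in> P" and x: "x = conj_elem g y" by blast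
    have yG: "y \<in> G" using y P(2) by blast
    have "g \<otimes>\<^bsub>?H\<^esub> y \<otimes>\<^bsub>?H\<^esub> inv\<^bsub>?H\<^esub> g \<in> carrier ?H"
      using g yG by (intro Hg.m_closed Hg.inv_closed) simp_all
    then have xG: "x \<in> G" unfolding x conjH[OF g] by simp
    have grP: "group (GL\<lparr>carrier := P\<rparr>)" using P(1) GLg.is_group by (rule subgroup.subgroup_is_group)
    have "group.ord (GL\<lparr>carrier := P\<rparr>) y dvd order (GL\<lparr>carrier := P\<rparr>)"
      using group.ord_dvd_group_order[OF grP, of y] y by simp
    then have "group.ord GL y dvd p ^ multiplicity p (card G)"
      using ord_sub[OF P(1) y] P(3) unfolding order_def by simp
    then obtain i where "group.ord GL y = p ^ i" using divides_primepow_nat[OF p] by blast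
    moreover have "group.ord GL x = group.ord GL y" unfolding x by (rule ord_conj[OF Ginv[OF g] Ginv[OF yG]])
    ultimately show "x \<in> p_elements p G" using xG unfolding p_elements_def by auto
  next
    fix x assume "x \<in> p_elements p G"
    then obtain k where xG: "x \<in> G" and ordx: "group.ord GL x = p ^ k" unfolding p_elements_def by blast
    have xGL: "x \<in> carrier GL" using Ginv[OF xG] by simp
    define K where "K = generate GL {x}"
    have cardK: "card K = p ^ k" unfolding K_def using GLg.generate_pow_card[OF xGL] ordx by simp
    have subK: "subgroup K GL" unfolding K_def using xGL by (intro GLg.generate_is_subgroup) simp
    have KG: "K \<subseteq> G" unfolding K_def using xG by (intro GLg.generate_subgroup_incl[OF _ G]) simp
    have xK: "x \<in> K" unfolding K_def by (rule generate.incl) simp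
    have grK: "group (GL\<lparr>carrier := K\<rparr>)" using subK GLg.is_group by (rule subgroup.subgroup_is_group)
    define E where "E = rcosets\<^bsub>?H\<^esub> P"
    have EP: "E \<subseteq> Pow G" unfolding E_def using Hg.rcosets_subset_PowG[OF PH] by simp
    have finE: "finite E" using EP finite_Pow_iff finite_subset by (metis finite)
    have lag: "card E * card P = card G" unfolding E_def using Hg.lagrange[OF PH] unfolding order_def by simp
    have G0: "card G \<noteq> 0" using subgroup.one_closed[OF G] by (auto simp: card_eq_0_iff)
    have pnu: "\<not> is_unit p" using p not_prime_unit by blast
    have ndE: "\<not> p dvd card E"
    proof -
      have "card E = card G div p ^ multiplicity p (card G)"
        using lag P(3) p by (metis G0 mult_is_0 nonzero_mult_div_cancel_right)
      then show ?thesis using multiplicity_decompose[OF G0 pnu] by simp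
    qed
    have yinv: "inv\<^bsub>?H\<^esub> y \<in> G" if yK: "y \<in> K" for y
      using Hg.inv_closed[of y] yK KG by auto
    have cl: "C #>\<^bsub>?H\<^esub> inv\<^bsub>?H\<^esub> y \<in> E" if y: "y \<in> carrier (GL\<lparr>carrier := K\<rparr>)" and C: "C \<in> E" for y C
    proof -
      obtain g where g: "g \<in> G" "C = P #>\<^bsub>?H\<^esub> g" using C unfolding E_def RCOSETS_def by auto
      have "C #>\<^bsub>?H\<^esub> inv\<^bsub>?H\<^esub> y = P #>\<^bsub>?H\<^esub> (g \<otimes>\<^bsub>?H\<^esub> inv\<^bsub>?H\<^esub> y)"
        using g Hg.coset_mult_assoc[of P g "inv\<^bsub>?H\<^esub> y"] P(2) yinv y by simp
      moreover have "g \<otimes>\<^bsub>?H\<^esub> inv\<^bsub>?H\<^esub> y \<in> G" using g yinv y Hg.m_closed[of g "inv\<^bsub>?H\<^esub> y"] by simp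
      ultimately show ?thesis unfolding E_def using Hg.rcosetsI[of P] P(2) by simp
    qed
    have one: "C #>\<^bsub>?H\<^esub> inv\<^bsub>?H\<^esub> \<one>\<^bsub>GL\<lparr>carrier := K\<rparr>\<^esub> = C" if C: "C \<in> E" for C
    proof -
      have "\<one>\<^bsub>GL\<lparr>carrier := K\<rparr>\<^esub> = \<one>\<^bsub>?H\<^esub>" by simp
      moreover have "C \<subseteq> G" using C EP by blast
      ultimately show ?thesis using Hg.coset_mult_one[of C] Hg.inv_one by simp
    qed
    have mul: "C #>\<^bsub>?H\<^esub> inv\<^bsub>?H\<^esub> (a \<otimes>\<^bsub>GL\<lparr>carrier := K\<rparr>\<^esub> b) =
        (C #>\<^bsub>?H\<^esub> inv\<^bsub>?H\<^esub> b) #>\<^bsub>?H\<^esub> inv\<^bsub>?H\<^esub> a"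
      if a: "a \<in> carrier (GL\<lparr>carrier := K\<rparr>)" and b: "b \<in> carrier (GL\<lparr>carrier := K\<rparr>)" and C: "C \<in> E" for a b C
    proof -
      have aG: "a \<in> G" and bG: "b \<in> G" using a b KG by auto
      have CG: "C \<subseteq> G" using C EP by blast
      have "a \<otimes>\<^bsub>GL\<lparr>carrier := K\<rparr>\<^esub> b = a \<otimes>\<^bsub>?H\<^esub> b" by simp
      then have "inv\<^bsub>?H\<^esub> (a \<otimes>\<^bsub>GL\<lparr>carrier := K\<rparr>\<^esub> b) = inv\<^bsub>?H\<^esub> b \<otimes>\<^bsub>?H\<^esub> inv\<^bsub>?H\<^esub> a"
        using Hg.inv_mult_group[of a b] aG bG by simp
      then show ?thesis using Hg.coset_mult_assoc[of C "inv\<^bsub>?H\<^esub> b" "inv\<^bsub>?H\<^esub> a"] CG aG bG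
          Hg.inv_closed[of a] Hg.inv_closed[of b] by simp
    qed
    obtain C0 where C0: "C0 \<in> E" and fx: "\<forall>y\<in>carrier (GL\<lparr>carrier := K\<rparr>). C0 #>\<^bsub>?H\<^esub> inv\<^bsub>?H\<^esub> y = C0"
      using fixed_point[OF grK _ p finE ndE, of k "\<lambda>y C. C #>\<^bsub>?H\<^esub> inv\<^bsub>?H\<^esub> y", OF _ cl one mul] cardK
      by auto
    obtain g where g: "g \<in> G" "C0 = P #>\<^bsub>?H\<^esub> g" using C0 unfolding E_def RCOSETS_def by auto
    have ixG: "inv\<^bsub>?H\<^esub> x \<in> G" using xG Hg.inv_closed[of x] by simp
    have "P #>\<^bsub>?H\<^esub> (g \<otimes>\<^bsub>?H\<^esub> inv\<^bsub>?H\<^esub> x) = P #>\<^bsub>?H\<^esub> g"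
      using fx xK g Hg.coset_mult_assoc[of P g "inv\<^bsub>?H\<^esub> x"] P(2) ixG by simp
    then have "g \<otimes>\<^bsub>?H\<^esub> inv\<^bsub>?H\<^esub> x \<in> P #>\<^bsub>?H\<^esub> g"
      using Hg.repr_independenceD[OF PH, of "g \<otimes>\<^bsub>?H\<^esub> inv\<^bsub>?H\<^esub> x" g] g ixG
        Hg.m_closed[of g "inv\<^bsub>?H\<^esub> x"] by simp
    then obtain h where h: "h \<in> P" and gh: "g \<otimes>\<^bsub>?H\<^esub> inv\<^bsub>?H\<^esub> x = h \<otimes>\<^bsub>?H\<^esub> g"
      unfolding r_coset_def by auto
    have hG: "h \<in> G" using h P(2) by blast
    have "inv\<^bsub>?H\<^esub> x = inv\<^bsub>?H\<^esub> g \<otimes>\<^bsub>?H\<^esub> (h \<otimes>\<^bsub>?H\<^esub> g)"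
      using Hg.inv_solve_left[of "inv\<^bsub>?H\<^esub> x" g "h \<otimes>\<^bsub>?H\<^esub> g"] gh g hG ixG
        Hg.m_closed[of h g] by simp
    then have "x = inv\<^bsub>?H\<^esub> (inv\<^bsub>?H\<^esub> g \<otimes>\<^bsub>?H\<^esub> (h \<otimes>\<^bsub>?H\<^esub> g))"
    proof -
      have "x = inv\<^bsub>?H\<^esub> (inv\<^bsub>?H\<^esub> x)" using Hg.inv_inv[of x] xG by simp
      then show ?thesis using \<open>inv\<^bsub>?H\<^esub> x = inv\<^bsub>?H\<^esub> g \<otimes>\<^bsub>?H\<^esub> (h \<otimes>\<^bsub>?H\<^esub> g)\<close> by simp
    qed
    also have "\<dots> = (inv\<^bsub>?H\<^esub> g \<otimes>\<^bsub>?H\<^esub> inv\<^bsub>?H\<^esub> h) \<otimes>\<^bsub>?H\<^esub> g"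
    proof -
      have c1: "inv\<^bsub>?H\<^esub> g \<in> carrier ?H" "h \<otimes>\<^bsub>?H\<^esub> g \<in> carrier ?H"
        using g hG Hg.inv_closed[of g] Hg.m_closed[of h g] by auto
      have a1: "inv\<^bsub>?H\<^esub> (inv\<^bsub>?H\<^esub> g \<otimes>\<^bsub>?H\<^esub> (h \<otimes>\<^bsub>?H\<^esub> g)) =
          inv\<^bsub>?H\<^esub> (h \<otimes>\<^bsub>?H\<^esub> g) \<otimes>\<^bsub>?H\<^esub> inv\<^bsub>?H\<^esub> (inv\<^bsub>?H\<^esub> g)"
        by (rule Hg.inv_mult_group[OF c1])
      have a2: "inv\<^bsub>?H\<^esub> (h \<otimes>\<^bsub>?H\<^esub> g) = inv\<^bsub>?H\<^esub> g \<otimes>\<^bsub>?H\<^esub> inv\<^bsub>?H\<^esub> h"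
        using Hg.inv_mult_group[of h g] g hG by simp
      have a3: "inv\<^bsub>?H\<^esub> (inv\<^bsub>?H\<^esub> g) = g" using Hg.inv_inv[of g] g by simp
      show ?thesis unfolding a1 a2 a3 ..
    qed
    also have "\<dots> = conj_elem (inv\<^bsub>?H\<^esub> g) (inv\<^bsub>?H\<^esub> h)"
      using conjH[of "inv\<^bsub>?H\<^esub> g" "inv\<^bsub>?H\<^esub> h"] g Hg.inv_closed[of g] Hg.inv_inv[of g] by simp
    finally have "x = conj_elem (inv\<^bsub>?H\<^esub> g) (inv\<^bsub>?H\<^esub> h)" .
    moreover have "inv\<^bsub>?H\<^esub> h \<in> P" using subgroup.m_inv_closed[OF PH h] .
    moreover have "inv\<^bsub>?H\<^esub> g \<in> G" using g Hg.inv_closed[of g] by simp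
    ultimately show "x \<in> (\<Union>g\<in>G. conj_elem g ` P)" by blast
  qed
qed


lemma fixed_zero: "(0::'k::field^'n::finite) \<in> fixed_space Q"
  unfolding fixed_space_def mat_act_def by simp

lemma card_fixed_pos: "card (fixed_space (Q::('k::{field,finite}^'n::finite^'n) set)) > 0"
  using fixed_zero[of Q] by (auto simp: card_gt_0_iff)

lemma cover_count:
  fixes S :: "('k::{field,finite}^'n::finite^'n) set set"
  assumes cov: "\<And>v. \<exists>Q\<in>S. v \<in> fixed_space Q" and cst: "\<And>Q. Q \<in> S \<Longrightarrow> card (fixed_space Q) = c"
  shows "CARD('k^'n) \<le> card S * c"
proof -
  have fS: "finite S" by simp
  have "(UNIV :: ('k^'n) set) = (\<Union>Q\<in>S. fixed_space Q)" using cov by blast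
  then have "CARD('k^'n) = card (\<Union>Q\<in>S. fixed_space Q)" by simp
  also have "\<dots> \<le> (\<Sum>Q\<in>S. card (fixed_space Q))" by (rule card_UN_le[OF fS])
  also have "\<dots> = (\<Sum>Q\<in>S. c)" using cst by (rule sum.cong[OF refl])
  also have "\<dots> = card S * c" by simp
  finally show ?thesis .
qed

lemma range_psi_eq:
  fixes Q Q' :: "('k::{field,finite}^'n::finite^'n) set"
  assumes "card (fixed_space Q) = card (fixed_space Q')"
  shows "card (range (psi Q)) = card (range (psi Q'))"
proof -
  have "card (range (psi Q)) * card (fixed_space Q) = card (range (psi Q')) * card (fixed_space Q)"
    using card_psi[of Q] card_psi[of Q'] assms by simp
  then show ?thesis using card_fixed_pos[of Q] by (metis mult_right_cancel less_not_refl)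
qed



theorem lemma2p4:
  fixes G P :: "('k::{field,finite} ^'n::finite ^'n) set"
    and t :: "'k ^'n ^'n"
    and p a :: nat
  assumes "Factorial_Ring.prime p"
    and "CARD('k) = p ^ a"
    and "subgroup G GL"
    and "p_exceptional p G"
    and "fixed_space (Opp p G) = {0}"
    and "t \<in> G" and "group.ord GL t = p"
    and "sylow_sub p G P"
  shows "real CARD('n) \<le> real (r_p p G P) *
           log (real CARD('k)) (real (card G) / real (card (normalizer (GL\<lparr>carrier := G\<rparr>) P)))
         \<and> CARD('k ^'n) \<le> card (fixed_space {t}) * card (conj_class G t)
         \<and> (\<forall>ts. set ts \<subseteq> conj_class G t \<and> generate GL (set ts) = Opp p G \<longrightarrow>
           real CARD('k) powr (real CARD('n) / real (length ts)) \<le> real (card (conj_class G t)))"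
proof -
  note p = assms(1) and G = assms(3) and ex = assms(4) and Opp0 = assms(5) and tG = assms(6)
    and ordt = assms(7) and syl = assms(8)
  interpret GLg: group "GL :: ('k^'n^'n) monoid" by (rule group_GL)
  have P: "subgroup P GL" "P \<subseteq> G" "card P = p ^ multiplicity p (card G)"
    using syl unfolding sylow_sub_def by auto
  have Ginv: "invertible g" if "g \<in> G" for g using that subgroup.subset[OF G] by auto
  have cV: "CARD('k^'n) = CARD('k) ^ CARD('n)" by (rule CARD_vec)
  have q2: "CARD('k) \<ge> 2"
  proof -
    have "card {0::'k, 1} = 2" by simp
    moreover have "card {0::'k, 1} \<le> CARD('k)" by (rule card_mono) auto
    ultimately show ?thesis by simp
  qed
  have oneG: "mat 1 \<in> G" using subgroup.one_closed[OF G] by simp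
  define K where "K = generate GL {t}"
  have tGL: "t \<in> carrier GL" using Ginv[OF tG] by simp
  have cardK: "card K = p ^ 1" unfolding K_def using GLg.generate_pow_card[OF tGL] ordt by simp
  have subK: "subgroup K GL" unfolding K_def using tGL by (intro GLg.generate_is_subgroup) simp
  have KG: "K \<subseteq> G" unfolding K_def using tG by (intro GLg.generate_subgroup_incl[OF _ G]) simp
  have tK: "t \<in> K" unfolding K_def by (rule generate.incl) simp
  define cc where "cc = conj_class G t"
  have cc_eq: "cc = (\<lambda>g. conj_elem g t) ` G" unfolding cc_def conj_class_def by (rule Setcompr_eq_image)
  have ccG: "cc \<subseteq> G"
  proof
    fix s assume "s \<in> cc"
    then obtain g where g: "g \<in> G" "s = conj_elem g t" using cc_eq by blast
    have "inv\<^bsub>GL\<^esub> g \<in> G" using subgroup.m_inv_closed[OF G g(1)] .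
    then have "matrix_inv g \<in> G" using GL_inv[OF Ginv[OF g(1)]] by simp
    then show "s \<in> G" unfolding g conj_elem_def using g(1) tG subgroup.m_closed[OF G] by simp
  qed
  have ccfix: "card (fixed_space {s}) = card (fixed_space {t})" if sc: "s \<in> cc" for s
  proof -
    obtain g where g: "g \<in> G" "s = conj_elem g t" using sc cc_eq by blast
    have "conj_elem g ` {t} = {s}" using g by simp
    then show ?thesis using card_fixed_conj[OF Ginv[OF g(1)], of "{t}"] by simp
  qed
  have covt: "\<exists>Q\<in>(\<lambda>s. {s}) ` cc. v \<in> fixed_space Q" for v
  proof -
    obtain g where g: "g \<in> G" "\<forall>k\<in>K. conj_elem g k *v v = v"
      using covering[OF G ex p subK KG cardK] by blast
    have "conj_elem g t \<in> cc" using g(1) cc_eq by blast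
    moreover have "v \<in> fixed_space {conj_elem g t}" using g(2) tK unfolding fixed_space_def mat_act_def by simp
    ultimately show ?thesis by blast
  qed
  have cardS: "card ((\<lambda>s. {s}) ` cc) = card cc" by (rule card_image) (simp add: inj_on_def)
  have ii: "CARD('k ^'n) \<le> card (fixed_space {t}) * card cc"
    using cover_count[of "(\<lambda>s. {s}) ` cc" "card (fixed_space {t})"] covt ccfix cardS
    by (auto simp: mult.commute)
  define R where "R = card (range (psi {t}))"
  define c where "c = card (fixed_space {t})"
  have cpos: "c > 0" unfolding c_def by (rule card_fixed_pos)
  have RV: "CARD('k^'n) = R * c" unfolding R_def c_def by (rule card_psi)
  have Rs: "card (range (psi {s})) = R" if "s \<in> cc" for s
    unfolding R_def using ccfix[OF that] by (rule range_psi_eq)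
  have Rcc: "R \<le> card cc" using ii RV cpos unfolding c_def[symmetric] by (simp add: mult.commute)
  have ccne: "card cc \<ge> 1"
  proof -
    have "cc \<noteq> {}" using cc_eq oneG by blast
    then show ?thesis by (simp add: Suc_le_eq card_gt_0_iff)
  qed
  have iii: "real CARD('k) powr (real CARD('n) / real (length ts)) \<le> real (card cc)"
    if ts: "set ts \<subseteq> cc" "generate GL (set ts) = Opp p G" for ts
  proof -
    define Qs where "Qs = map (\<lambda>s. {s}) ts"
    have U: "\<Union>(set Qs) = set ts" unfolding Qs_def by auto
    have tsinv: "set ts \<subseteq> {A. invertible A}" using ts(1) ccG Ginv by blast
    have "fixed_space (\<Union>(set Qs)) = {0}"
      unfolding U using fixed_generate[OF tsinv] ts(2) Opp0 by simp
    then have "CARD('k^'n) \<le> (\<Prod>i<length Qs. card (range (psi (Qs!i))))" by (rule card_le_prod)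
    also have "\<dots> = (\<Prod>i<length ts. R)"
    proof (rule prod.cong)
      show "{..<length Qs} = {..<length ts}" unfolding Qs_def by simp
      fix i assume "i \<in> {..<length ts}"
      then have i: "i < length ts" by simp
      then have "ts ! i \<in> cc" using ts(1) nth_mem by blast
      then show "card (range (psi (Qs!i))) = R" unfolding Qs_def using i Rs by simp
    qed
    also have "\<dots> = R ^ length ts" by simp
    finally have le: "CARD('k) ^ CARD('n) \<le> R ^ length ts" using cV by simp
    show ?thesis
    proof (cases "length ts = 0")
      case True
      then show ?thesis using ccne q2 by simp
    next
      case False
      let ?x = "real CARD('k) powr (real CARD('n) / real (length ts))"
      have qpos: "real CARD('k) > 0" using q2 by simp
      have "?x ^ length ts = real CARD('k) powr (real CARD('n) / real (length ts) * real (length ts))"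
        using qpos by (simp add: powr_realpow[symmetric] powr_powr)
      also have "\<dots> = real CARD('k) powr real CARD('n)" using False by simp
      also have "\<dots> = real CARD('k) ^ CARD('n)" using qpos by (simp add: powr_realpow)
      finally have xe: "?x ^ length ts = real CARD('k) ^ CARD('n)" .
      have "?x \<le> real R"
      proof (rule ccontr)
        assume "\<not> ?x \<le> real R"
        then have "real R ^ length ts < ?x ^ length ts"
          using False by (intro power_strict_mono) auto
        also have "\<dots> = real (CARD('k) ^ CARD('n))" using xe by simp
        also have "\<dots> \<le> real (R ^ length ts)" using le by linarith
        finally show False by simp
      qed
      also have "\<dots> \<le> real (card cc)" using Rcc by simp
      finally show ?thesis .
    qed
  qed
  define CS where "CS = (\<lambda>g. conj_elem g ` P) ` G"
  define NP where "NP = card CS"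
  define cN where "cN = card (normalizer (GL\<lparr>carrier := G\<rparr>) P)"
  have NPN: "NP * cN = card G" unfolding NP_def cN_def CS_def by (rule card_conjugates[OF G P(2)])
  have G0: "card G > 0" using oneG by (auto simp: card_gt_0_iff)
  have cN0: "cN > 0" using NPN G0 by (cases cN) auto
  have NPeq: "real (card G) / real cN = real NP" using NPN cN0
    by (metis nonzero_mult_div_cancel_right of_nat_0_less_iff of_nat_mult less_irrefl)
  have NP1: "NP \<ge> 1" using NPN G0 by (cases NP) auto
  define RP where "RP = card (range (psi P))"
  define cP where "cP = card (fixed_space P)"
  have cPpos: "cP > 0" unfolding cP_def by (rule card_fixed_pos)
  have RPV: "CARD('k^'n) = RP * cP" unfolding RP_def cP_def by (rule card_psi)
  have CSfix: "card (fixed_space Q) = cP" if "Q \<in> CS" for Q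
    using that card_fixed_conj Ginv unfolding CS_def cP_def by auto
  have CSR: "card (range (psi Q)) = RP" if "Q \<in> CS" for Q
    unfolding RP_def using CSfix[OF that] unfolding cP_def by (rule range_psi_eq)
  have covP: "\<exists>Q\<in>CS. v \<in> fixed_space Q" for v
  proof -
    obtain g where g: "g \<in> G" "\<forall>k\<in>P. conj_elem g k *v v = v"
      using covering[OF G ex p P(1) P(2) P(3)] by blast
    have "conj_elem g ` P \<in> CS" using g(1) unfolding CS_def by blast
    moreover have "v \<in> fixed_space (conj_elem g ` P)" using g(2) unfolding fixed_space_def mat_act_def by auto
    ultimately show ?thesis by blast
  qed
  have "CARD('k^'n) \<le> NP * cP" unfolding NP_def using cover_count[OF covP CSfix] .
  then have RPN: "RP \<le> NP" using RPV cPpos by simp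
  have OppEq: "Opp p G = generate GL (\<Union>g\<in>G. conj_elem g ` P)"
    unfolding Opp_def using pel_eq[OF G p syl] by simp
  obtain gsG where gsG: "set gsG = G" using finite_list[of G] by auto
  have exr: "\<exists>r gs. length gs = r \<and> set gs \<subseteq> G \<and> generate GL (\<Union>g\<in>set gs. conj_elem g ` P) = Opp p G"
    using gsG OppEq by auto
  have "\<exists>gs. length gs = r_p p G P \<and> set gs \<subseteq> G \<and> generate GL (\<Union>g\<in>set gs. conj_elem g ` P) = Opp p G"
    unfolding r_p_def using exr by (rule LeastI_ex)
  then obtain gs where gs: "length gs = r_p p G P" "set gs \<subseteq> G"
    "generate GL (\<Union>g\<in>set gs. conj_elem g ` P) = Opp p G" by blast
  define Qs where "Qs = map (\<lambda>g. conj_elem g ` P) gs"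
  have U: "\<Union>(set Qs) = (\<Union>g\<in>set gs. conj_elem g ` P)" unfolding Qs_def by auto
  have Uinv: "(\<Union>g\<in>set gs. conj_elem g ` P) \<subseteq> {A. invertible A}"
  proof
    fix x assume "x \<in> (\<Union>g\<in>set gs. conj_elem g ` P)"
    then obtain g y where g: "g \<in> G" and y: "y \<in> P" and x: "x = conj_elem g y" using gs(2) by blast
    have "invertible (g ** y ** matrix_inv g)"
      using Ginv[OF g] Ginv y P(2) by (intro invertible_mult invertible_matrix_inv) auto
    then show "x \<in> {A. invertible A}" unfolding x conj_elem_def by simp
  qed
  have "fixed_space (\<Union>(set Qs)) = {0}"
    unfolding U using fixed_generate[OF Uinv] gs(3) Opp0 by simp
  then have "CARD('k^'n) \<le> (\<Prod>i<length Qs. card (range (psi (Qs!i))))" by (rule card_le_prod)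
  also have "\<dots> = (\<Prod>i<length gs. RP)"
  proof (rule prod.cong)
    show "{..<length Qs} = {..<length gs}" unfolding Qs_def by simp
    fix i assume "i \<in> {..<length gs}"
    then have i: "i < length gs" by simp
    then have "gs ! i \<in> G" using gs(2) nth_mem by blast
    then have "conj_elem (gs ! i) ` P \<in> CS" unfolding CS_def by blast
    then show "card (range (psi (Qs!i))) = RP" unfolding Qs_def using i CSR by simp
  qed
  also have "\<dots> = RP ^ r_p p G P" using gs(1) by simp
  also have "\<dots> \<le> NP ^ r_p p G P" using RPN by (rule power_mono) simp
  finally have le: "CARD('k) ^ CARD('n) \<le> NP ^ r_p p G P" using cV by simp
  have q1: "real CARD('k) > 1" using q2 by simp
  have "real CARD('n) = log (real CARD('k)) (real CARD('k) ^ CARD('n))"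
    using q1 by (simp add: log_nat_power)
  also have "\<dots> \<le> log (real CARD('k)) (real NP ^ r_p p G P)"
  proof -
    have "real (CARD('k) ^ CARD('n)) \<le> real (NP ^ r_p p G P)" using le by linarith
    then show ?thesis using q1 NP1 by (subst log_le_cancel_iff) auto
  qed
  also have "\<dots> = real (r_p p G P) * log (real CARD('k)) (real NP)"
    using NP1 by (simp add: log_nat_power)
  finally have i: "real CARD('n) \<le> real (r_p p G P) *
           log (real CARD('k)) (real (card G) / real (card (normalizer (GL\<lparr>carrier := G\<rparr>) P)))"
    using NPeq unfolding cN_def by simp
  show ?thesis using i ii iii unfolding cc_def by blast
qed

end
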